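(* Let $R$ be a commutative ring with identity, $\mathcal S$ an associative $R$-algebra with identity, $\mathcal M$ a $2$-torsion free bimodule over $\mathcal S$, $\delta$ a derivation on $\mathcal S$ and $f:\mathcal S\to\mathcal M$ a bimodule homomorphism over $\mathcal S$. If $D:\mathcal S\to\mathcal M$ is a Jordan $(\delta,f)$-derivation on $\mathcal M$, then $D(xyx)=D(x)yx+f(x)\delta(y)x+f(x)y\delta(x)$ for all $x,y\in\mathcal S$.
   Context: A derivation on $\mathcal S$ is an additive map $\delta$ with $\delta(ab)=\delta(a)b+a\delta(b)$. An additive map $D:\mathcal S\to\mathcal M$ is a Jordan $(\delta,f)$-derivation if $D(x^2)=D(x)x+f(x)\delta(x)$ for all $x\in\mathcal S$. $\mathcal M$ is $2$-torsion free if $2m=0$ implies $m=0$. *)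

theory Defs
  imports Main
begin

definition is_algebra_over :: "('r::comm_ring_1 \<Rightarrow> 's::ring_1 \<Rightarrow> 's) \<Rightarrow> bool" where
  "is_algebra_over smul \<longleftrightarrow>
     (\<forall>r a b. smul r (a + b) = smul r a + smul r b) \<and>
     (\<forall>r q a. smul (r + q) a = smul r a + smul q a) \<and>
     (\<forall>r q a. smul (r * q) a = smul r (smul q a)) \<and>
     (\<forall>a. smul 1 a = a) \<and>
     (\<forall>r a b. smul r (a * b) = smul r a * b) \<and>
     (\<forall>r a b. smul r (a * b) = a * smul r b)"

definition is_bimodule :: "('s::ring_1 \<Rightarrow> 'm::ab_group_add \<Rightarrow> 'm) \<Rightarrow> ('m \<Rightarrow> 's \<Rightarrow> 'm) \<Rightarrow> bool" where
  "is_bimodule lact ract \<longleftrightarrow>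
     (\<forall>a m n. lact a (m + n) = lact a m + lact a n) \<and>
     (\<forall>a b m. lact (a + b) m = lact a m + lact b m) \<and>
     (\<forall>a b m. lact (a * b) m = lact a (lact b m)) \<and>
     (\<forall>m. lact 1 m = m) \<and>
     (\<forall>a m n. ract (m + n) a = ract m a + ract n a) \<and>
     (\<forall>a b m. ract m (a + b) = ract m a + ract m b) \<and>
     (\<forall>a b m. ract m (a * b) = ract (ract m a) b) \<and>
     (\<forall>m. ract m 1 = m) \<and>
     (\<forall>a b m. ract (lact a m) b = lact a (ract m b))"

definition two_torsion_free :: "'m::ab_group_add set \<Rightarrow> bool" where
  "two_torsion_free M \<longleftrightarrow> (\<forall>m \<in> M. m + m = 0 \<longrightarrow> m = 0)"

definition additive_map :: "('a::ab_group_add \<Rightarrow> 'b::ab_group_add) \<Rightarrow> bool" where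
  "additive_map g \<longleftrightarrow> (\<forall>a b. g (a + b) = g a + g b)"

definition is_derivation :: "('s::ring_1 \<Rightarrow> 's) \<Rightarrow> bool" where
  "is_derivation \<delta> \<longleftrightarrow> additive_map \<delta> \<and> (\<forall>a b. \<delta> (a * b) = \<delta> a * b + a * \<delta> b)"

definition is_bimodule_hom ::
  "('s::ring_1 \<Rightarrow> 'm::ab_group_add \<Rightarrow> 'm) \<Rightarrow> ('m \<Rightarrow> 's \<Rightarrow> 'm) \<Rightarrow> ('s \<Rightarrow> 'm) \<Rightarrow> bool" where
  "is_bimodule_hom lact ract f \<longleftrightarrow> additive_map f \<and>
     (\<forall>a x. f (a * x) = lact a (f x)) \<and> (\<forall>a x. f (x * a) = ract (f x) a)"

definition is_jordan_der ::
  "('m::ab_group_add \<Rightarrow> 's::ring_1 \<Rightarrow> 'm) \<Rightarrow> ('s \<Rightarrow> 's) \<Rightarrow> ('s \<Rightarrow> 'm) \<Rightarrow> ('s \<Rightarrow> 'm) \<Rightarrow> bool" where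
  "is_jordan_der ract \<delta> f D \<longleftrightarrow> additive_map D \<and>
     (\<forall>x. D (x * x) = ract (D x) x + ract (f x) (\<delta> x))"

end

theory Submission
  imports Defs
begin

theorem lemma3p5:
  fixes smul :: "'r::comm_ring_1 \<Rightarrow> 's::ring_1 \<Rightarrow> 's"
    and lact :: "'s \<Rightarrow> 'm::ab_group_add \<Rightarrow> 'm"
    and ract :: "'m \<Rightarrow> 's \<Rightarrow> 'm"
    and \<delta> :: "'s \<Rightarrow> 's"
    and f D :: "'s \<Rightarrow> 'm"
  assumes "is_algebra_over smul"
    and "is_bimodule lact ract"
    and "two_torsion_free (UNIV :: 'm set)"
    and "is_derivation \<delta>"
    and "is_bimodule_hom lact ract f"
    and "is_jordan_der ract \<delta> f D"
  shows "\<forall>x y. D (x * y * x) =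
           ract (D x) (y * x) + ract (ract (f x) (\<delta> y)) x + ract (f x) (y * \<delta> x)"
proof (intro allI)
  fix x y
  have r1: "\<And>m n a. ract (m + n) a = ract m a + ract n a"
   and r2: "\<And>m a b. ract m (a + b) = ract m a + ract m b"
   and r3: "\<And>m a b. ract m (a * b) = ract (ract m a) b"
    using assms(2) unfolding is_bimodule_def by auto
  have dA: "\<And>a b. D (a + b) = D a + D b" and dJ: "\<And>a. D (a * a) = ract (D a) a + ract (f a) (\<delta> a)"
    using assms(6) unfolding is_jordan_der_def additive_map_def by auto
  have fA: "\<And>a b. f (a + b) = f a + f b" and fR: "\<And>a b. f (a * b) = ract (f a) b"
    using assms(5) unfolding is_bimodule_hom_def additive_map_def by auto
  have eA: "\<And>a b. \<delta> (a + b) = \<delta> a + \<delta> b" and eM: "\<And>a b. \<delta> (a * b) = \<delta> a * b + a * \<delta> b"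
    using assms(4) unfolding is_derivation_def additive_map_def by auto
  have tt: "\<And>m::'m. m + m = 0 \<Longrightarrow> m = 0"
    using assms(3) unfolding two_torsion_free_def by blast
  have lin: "D (a * b + b * a) = ract (D a) b + ract (D b) a + ract (f a) (\<delta> b) + ract (f b) (\<delta> a)" for a b
  proof -
    have "D ((a + b) * (a + b)) = ract (D (a+b)) (a+b) + ract (f (a+b)) (\<delta> (a+b))" by (rule dJ)
    moreover have "(a + b) * (a + b) = a * a + (a * b + b * a) + b * b"
      by (simp add: algebra_simps)
    ultimately have "D (a * a) + D (a * b + b * a) + D (b * b) = ract (D (a+b)) (a+b) + ract (f (a+b)) (\<delta> (a+b))"
      by (simp add: dA)
    then show ?thesis by (simp add: dJ dA fA eA r1 r2 add_ac)
  qed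
  define R where "R = ract (D x) (y * x) + ract (ract (f x) (\<delta> y)) x + ract (f x) (y * \<delta> x)"
  have e1: "D (x * (x * y + y * x) + (x * y + y * x) * x) = D ((x*x) * y + y * (x*x)) + (R + R)"
    unfolding lin R_def
    by (simp add: dA dJ fA eA eM fR r1 r2 r3 distrib_left distrib_right mult.assoc add_ac)
  have "x * (x * y + y * x) + (x * y + y * x) * x = ((x*x) * y + y * (x*x)) + x*y*x + x*y*x"
    by (simp add: algebra_simps)
  then have e2: "D (x * (x * y + y * x) + (x * y + y * x) * x) = D ((x*x) * y + y * (x*x)) + (D (x*y*x) + D (x*y*x))"
    by (simp add: dA add.assoc)
  from e1 e2 have "(D (x*y*x) - R) + (D (x*y*x) - R) = 0"
    by (simp add: algebra_simps)
  then have "D (x*y*x) - R = 0" by (rule tt)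
  then show "D (x * y * x) = R" unfolding R_def[symmetric] by simp
qed

end
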